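(* Let $\nabla$ be a torsion-free connection on a surface $\Sigma$ whose Ricci tensor $\rho$ is skew-symmetric and nonzero everywhere. For any $1$-form $\xi$ on $\Sigma$, setting $\tau=\mathcal{L}\xi$, we have a) $Q^*\xi=\mathcal{Z}\tau$, and b) $\nabla\xi=\tau+[\xi(w)-2\mathcal{D}(\mathcal{B}\tau)]\,\rho/4$.
   Context: All objects are $C^\infty$. Killing operator: $(\mathcal{L}\xi)(u,v)=\tfrac12[(\nabla_u\xi)(v)+(\nabla_v\xi)(u)]$. $\nabla\xi$ denotes the 2-tensor $(u,v)\mapsto(\nabla_u\xi)(v)$. Since $\rho$ trivializes $\Lambda^2T^*\Sigma$, there is a unique 1-form $\phi$ with $\nabla_v\rho=\phi(v)\rho$ for all $v$, and a unique vector field $w$ with $\phi=\rho(w,\cdot)$. $Q:T\Sigma\to T\Sigma$ is the bundle morphism $Q(v)=4v+\nabla_v w+\tfrac34\phi(v)w$, and $Q^*$ is its dual, $Q^*\xi=\xi\circ Q$. For a symmetric 2-tensor $\tau$, $d^\nabla\tau$ is the 3-tensor $(d^\nabla\tau)(u,v,x)=(\nabla_u\tau)(v,x)-(\nabla_v\tau)(u,x)$, and $\mathcal{B}\tau$ is the 1-form with $[(\mathcal{B}\tau)(v)]\rho=(d^\nabla\tau)(\cdot,\cdot,v)$. For a 1-form $\xi$, $\mathcal{D}\xi$ is the function with $2(\mathcal{D}\xi)\rho=\xi\wedge\phi-d\xi$, where $(\xi\wedge\phi)(u,v)=\xi(u)\phi(v)-\phi(u)\xi(v)$ and $d\xi(u,v)=u(\xi(v))-v(\xi(u))-\xi([u,v])$.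 Finally $\mathcal{Z}\tau=2\,d[\mathcal{D}(\mathcal{B}\tau)]+4\mathcal{B}\tau-\tau(w,\cdot)+\tfrac32[\mathcal{D}(\mathcal{B}\tau)]\phi$. *)

theory Defs
  imports "HOL-Analysis.Analysis"
begin

text \<open>Local coordinate rendering on an open set U of the plane (a chart of the surface).
  Points are real^2; tensor indices range over the type 2.
  Gamma k i j = Christoffel symbol with nabla_{d_i} d_j = sum_k Gamma k i j d_k.\<close>

type_synonym pt = "real ^ 2"

definition pd :: "2 \<Rightarrow> (pt \<Rightarrow> real) \<Rightarrow> pt \<Rightarrow> real" where
  "pd i f p = frechet_derivative f (at p) (axis i 1)"

fun dpart :: "2 list \<Rightarrow> (pt \<Rightarrow> real) \<Rightarrow> pt \<Rightarrow> real" where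
  "dpart [] f = f"
| "dpart (i # is) f = pd i (dpart is f)"

definition smooth_on :: "pt set \<Rightarrow> (pt \<Rightarrow> real) \<Rightarrow> bool" where
  "smooth_on U f \<longleftrightarrow> (\<forall>is. \<forall>p\<in>U. dpart is f differentiable (at p))"

definition cov1 :: "(2 \<Rightarrow> 2 \<Rightarrow> 2 \<Rightarrow> pt \<Rightarrow> real) \<Rightarrow> (2 \<Rightarrow> pt \<Rightarrow> real) \<Rightarrow> 2 \<Rightarrow> 2 \<Rightarrow> pt \<Rightarrow> real" where
  "cov1 \<Gamma> \<xi> i j p = pd i (\<xi> j) p - (\<Sum>k\<in>UNIV. \<Gamma> k i j p * \<xi> k p)"

definition covvec :: "(2 \<Rightarrow> 2 \<Rightarrow> 2 \<Rightarrow> pt \<Rightarrow> real) \<Rightarrow> (2 \<Rightarrow> pt \<Rightarrow> real) \<Rightarrow> 2 \<Rightarrow> 2 \<Rightarrow> pt \<Rightarrow> real" where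
  "covvec \<Gamma> v i k p = pd i (v k) p + (\<Sum>j\<in>UNIV. \<Gamma> k i j p * v j p)"

definition cov2 :: "(2 \<Rightarrow> 2 \<Rightarrow> 2 \<Rightarrow> pt \<Rightarrow> real) \<Rightarrow> (2 \<Rightarrow> 2 \<Rightarrow> pt \<Rightarrow> real) \<Rightarrow> 2 \<Rightarrow> 2 \<Rightarrow> 2 \<Rightarrow> pt \<Rightarrow> real" where
  "cov2 \<Gamma> \<tau> i j l p = pd i (\<tau> j l) p - (\<Sum>k\<in>UNIV. \<Gamma> k i j p * \<tau> k l p)
                         - (\<Sum>k\<in>UNIV. \<Gamma> k i l p * \<tau> j k p)"

text \<open>Curvature R(d_i,d_j)d_k = sum_l curv l k i j d_l, where
  R(u,v) = nabla_u nabla_v - nabla_v nabla_u - nabla_[u,v].\<close>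
definition curv :: "(2 \<Rightarrow> 2 \<Rightarrow> 2 \<Rightarrow> pt \<Rightarrow> real) \<Rightarrow> 2 \<Rightarrow> 2 \<Rightarrow> 2 \<Rightarrow> 2 \<Rightarrow> pt \<Rightarrow> real" where
  "curv \<Gamma> l k i j p = pd i (\<Gamma> l j k) p - pd j (\<Gamma> l i k) p
     + (\<Sum>m\<in>UNIV. \<Gamma> l i m p * \<Gamma> m j k p - \<Gamma> l j m p * \<Gamma> m i k p)"

text \<open>Ricci tensor rho(v,x) = trace(u |-> R(u,v)x).\<close>
definition ricci :: "(2 \<Rightarrow> 2 \<Rightarrow> 2 \<Rightarrow> pt \<Rightarrow> real) \<Rightarrow> 2 \<Rightarrow> 2 \<Rightarrow> pt \<Rightarrow> real" where
  "ricci \<Gamma> j k p = (\<Sum>i\<in>UNIV. curv \<Gamma> i k i j p)"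

definition killing :: "(2 \<Rightarrow> 2 \<Rightarrow> 2 \<Rightarrow> pt \<Rightarrow> real) \<Rightarrow> (2 \<Rightarrow> pt \<Rightarrow> real) \<Rightarrow> 2 \<Rightarrow> 2 \<Rightarrow> pt \<Rightarrow> real" where
  "killing \<Gamma> \<xi> i j p = (cov1 \<Gamma> \<xi> i j p + cov1 \<Gamma> \<xi> j i p) / 2"

definition phi :: "(2 \<Rightarrow> 2 \<Rightarrow> 2 \<Rightarrow> pt \<Rightarrow> real) \<Rightarrow> 2 \<Rightarrow> pt \<Rightarrow> real" where
  "phi \<Gamma> i p = (THE c. \<forall>j k. cov2 \<Gamma> (ricci \<Gamma>) i j k p = c * ricci \<Gamma> j k p)"

definition wvec :: "(2 \<Rightarrow> 2 \<Rightarrow> 2 \<Rightarrow> pt \<Rightarrow> real) \<Rightarrow> 2 \<Rightarrow> pt \<Rightarrow> real" where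
  "wvec \<Gamma> k p = (THE v :: 2 \<Rightarrow> real. \<forall>j. phi \<Gamma> j p = (\<Sum>i\<in>UNIV. ricci \<Gamma> i j p * v i)) k"

text \<open>Q^* xi, where Q(v) = 4v + nabla_v w + (3/4) phi(v) w.\<close>
definition Qstar :: "(2 \<Rightarrow> 2 \<Rightarrow> 2 \<Rightarrow> pt \<Rightarrow> real) \<Rightarrow> (2 \<Rightarrow> pt \<Rightarrow> real) \<Rightarrow> 2 \<Rightarrow> pt \<Rightarrow> real" where
  "Qstar \<Gamma> \<xi> i p = 4 * \<xi> i p + (\<Sum>k\<in>UNIV. \<xi> k p * covvec \<Gamma> (wvec \<Gamma>) i k p)
      + 3/4 * phi \<Gamma> i p * (\<Sum>k\<in>UNIV. \<xi> k p * wvec \<Gamma> k p)"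

definition dnabla :: "(2 \<Rightarrow> 2 \<Rightarrow> 2 \<Rightarrow> pt \<Rightarrow> real) \<Rightarrow> (2 \<Rightarrow> 2 \<Rightarrow> pt \<Rightarrow> real) \<Rightarrow> 2 \<Rightarrow> 2 \<Rightarrow> 2 \<Rightarrow> pt \<Rightarrow> real" where
  "dnabla \<Gamma> \<tau> i j l p = cov2 \<Gamma> \<tau> i j l p - cov2 \<Gamma> \<tau> j i l p"

definition Bop :: "(2 \<Rightarrow> 2 \<Rightarrow> 2 \<Rightarrow> pt \<Rightarrow> real) \<Rightarrow> (2 \<Rightarrow> 2 \<Rightarrow> pt \<Rightarrow> real) \<Rightarrow> 2 \<Rightarrow> pt \<Rightarrow> real" where
  "Bop \<Gamma> \<tau> l p = (THE c. \<forall>i j. c * ricci \<Gamma> i j p = dnabla \<Gamma> \<tau> i j l p)"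

definition wedge1 :: "(2 \<Rightarrow> pt \<Rightarrow> real) \<Rightarrow> (2 \<Rightarrow> pt \<Rightarrow> real) \<Rightarrow> 2 \<Rightarrow> 2 \<Rightarrow> pt \<Rightarrow> real" where
  "wedge1 \<xi> \<eta> i j p = \<xi> i p * \<eta> j p - \<eta> i p * \<xi> j p"

text \<open>Exterior derivative of a 1-form (coordinate vector fields commute).\<close>
definition dform :: "(2 \<Rightarrow> pt \<Rightarrow> real) \<Rightarrow> 2 \<Rightarrow> 2 \<Rightarrow> pt \<Rightarrow> real" where
  "dform \<xi> i j p = pd i (\<xi> j) p - pd j (\<xi> i) p"

definition Dop :: "(2 \<Rightarrow> 2 \<Rightarrow> 2 \<Rightarrow> pt \<Rightarrow> real) \<Rightarrow> (2 \<Rightarrow> pt \<Rightarrow> real) \<Rightarrow> pt \<Rightarrow> real" where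
  "Dop \<Gamma> \<xi> p = (THE c. \<forall>i j. 2 * c * ricci \<Gamma> i j p = wedge1 \<xi> (phi \<Gamma>) i j p - dform \<xi> i j p)"

definition Zop :: "(2 \<Rightarrow> 2 \<Rightarrow> 2 \<Rightarrow> pt \<Rightarrow> real) \<Rightarrow> (2 \<Rightarrow> 2 \<Rightarrow> pt \<Rightarrow> real) \<Rightarrow> 2 \<Rightarrow> pt \<Rightarrow> real" where
  "Zop \<Gamma> \<tau> i p = 2 * pd i (Dop \<Gamma> (Bop \<Gamma> \<tau>)) p + 4 * Bop \<Gamma> \<tau> i p
      - (\<Sum>k\<in>UNIV. \<tau> k i p * wvec \<Gamma> k p) + 3/2 * Dop \<Gamma> (Bop \<Gamma> \<tau>) p * phi \<Gamma> i p"

end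

theory Submission
  imports Defs
begin


lemma pd_has: assumes "(f has_derivative f') (at p)" shows "pd i f p = f' (axis i 1)"
proof -
  have "f' = frechet_derivative f (at p)" using assms by (rule frechet_derivative_at)
  then show ?thesis by (simp add: pd_def)
qed

lemma pd_add: "f differentiable at p \<Longrightarrow> g differentiable at p \<Longrightarrow>
   pd i (\<lambda>x. f x + g x) p = pd i f p + pd i g p"
proof -
  assume "f differentiable at p" "g differentiable at p"
  then obtain f' g' where f: "(f has_derivative f') (at p)" and g: "(g has_derivative g') (at p)"
    unfolding differentiable_def by blast
  show ?thesis using pd_has[OF has_derivative_add[OF f g]] pd_has[OF f] pd_has[OF g] by simp
qed

lemma pd_diff: "f differentiable at p \<Longrightarrow> g differentiable at p \<Longrightarrow>
   pd i (\<lambda>x. f x - g x) p = pd i f p - pd i g p"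
proof -
  assume "f differentiable at p" "g differentiable at p"
  then obtain f' g' where f: "(f has_derivative f') (at p)" and g: "(g has_derivative g') (at p)"
    unfolding differentiable_def by blast
  show ?thesis using pd_has[OF has_derivative_diff[OF f g]] pd_has[OF f] pd_has[OF g] by simp
qed

lemma pd_mult: "f differentiable at p \<Longrightarrow> g differentiable at p \<Longrightarrow>
   pd i (\<lambda>x. f x * g x) p = pd i f p * g p + f p * pd i g p"
proof -
  assume "f differentiable at p" "g differentiable at p"
  then obtain f' g' where f: "(f has_derivative f') (at p)" and g: "(g has_derivative g') (at p)"
    unfolding differentiable_def by blast
  have "((\<lambda>x. f x * g x) has_derivative (\<lambda>h. f p * g' h + f' h * g p)) (at p)"
    using has_derivative_mult[OF f g] by simp
  then have "pd i (\<lambda>x. f x * g x) p = f p * g' (axis i 1) + f' (axis i 1) * g p" by (rule pd_has)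
  then show ?thesis using pd_has[OF f, of i] pd_has[OF g, of i] by simp
qed

lemma pd_const: "pd i (\<lambda>x. c) p = 0"
  by (simp add: pd_def)

lemma pd_divide: "f differentiable at p \<Longrightarrow> g differentiable at p \<Longrightarrow> g p \<noteq> 0 \<Longrightarrow>
   pd i (\<lambda>x. f x / g x) p = (pd i f p * g p - f p * pd i g p) / (g p)^2"
proof -
  assume "f differentiable at p" "g differentiable at p" and gp: "g p \<noteq> 0"
  then obtain f' g' where f: "(f has_derivative f') (at p)" and g: "(g has_derivative g') (at p)"
    unfolding differentiable_def by blast
  have "pd i (\<lambda>x. f x / g x) p = - f p * (inverse (g p) * g' (axis i 1) * inverse (g p)) + f' (axis i 1) / g p"
    using pd_has[OF has_derivative_divide[OF f g gp]] .
  moreover have "\<And>a b c d::real. c \<noteq> 0 \<Longrightarrow> - a * (inverse c * b * inverse c) + d / c = (d * c - a * b) / c^2"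
    by (simp add: field_simps power2_eq_square)
  ultimately show ?thesis using pd_has[OF f, of i] pd_has[OF g, of i] gp by simp
qed

lemma pd_local: assumes "open U" "p \<in> U" "\<forall>q\<in>U. f q = g q"
  shows "pd i f p = pd i g p"
proof -
  have "\<And>D. (f has_derivative D) (at p) = (g has_derivative D) (at p)"
  proof
    fix D assume "(f has_derivative D) (at p)"
    then show "(g has_derivative D) (at p)"
      by (rule has_derivative_transform_within_open[OF _ assms(1,2)]) (use assms(3) in blast)
  next
    fix D assume "(g has_derivative D) (at p)"
    then show "(f has_derivative D) (at p)"
      by (rule has_derivative_transform_within_open[OF _ assms(1,2)]) (use assms(3) in auto)
  qed
  then show ?thesis unfolding pd_def frechet_derivative_def by simp
qed

lemma diff_local: assumes "open U" "p \<in> U" "\<forall>q\<in>U. f q = g q" "f differentiable at p"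
  shows "g differentiable at p"
proof -
  obtain D where "(f has_derivative D) (at p)" using assms(4) unfolding differentiable_def by blast
  then have "(g has_derivative D) (at p)"
    by (rule has_derivative_transform_within_open[OF _ assms(1,2)]) (use assms(3) in blast)
  then show ?thesis unfolding differentiable_def by blast
qed

lemma dpart_snoc: "dpart (is @ [i]) f = dpart is (pd i f)"
  by (induction "is") auto

lemma dpart_local: assumes "open U" "\<forall>q\<in>U. f q = g q"
  shows "\<forall>q\<in>U. dpart is f q = dpart is g q"
proof (induction "is")
  case Nil then show ?case using assms(2) by simp
next
  case (Cons i "is")
  show ?case
  proof
    fix q assume "q \<in> U"
    then show "dpart (i # is) f q = dpart (i # is) g q"
      using pd_local[OF assms(1) \<open>q\<in>U\<close> Cons.IH] by simp
  qed
qed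

definition sm :: "nat \<Rightarrow> pt set \<Rightarrow> (pt \<Rightarrow> real) \<Rightarrow> bool" where
  "sm n U f \<longleftrightarrow> (\<forall>is. length is \<le> n \<longrightarrow> (\<forall>p\<in>U. dpart is f differentiable at p))"

lemma smooth_sm: "smooth_on U f \<longleftrightarrow> (\<forall>n. sm n U f)"
  unfolding smooth_on_def sm_def by blast

lemma sm_local: assumes "sm n U f" "open U" "\<forall>q\<in>U. f q = g q"
  shows "sm n U g"
  unfolding sm_def
proof (intro allI impI ballI)
  fix "is" :: "2 list" and p assume "length is \<le> n" "p \<in> U"
  then have "dpart is f differentiable at p" using assms(1) sm_def by blast
  moreover have "\<forall>q\<in>U. dpart is f q = dpart is g q" using dpart_local[OF assms(2,3)] by blast
  ultimately show "dpart is g differentiable at p"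
    using diff_local[OF assms(2) \<open>p\<in>U\<close>] by blast
qed

lemma sm_pd: assumes "sm (Suc n) U f" shows "sm n U (pd i f)"
  unfolding sm_def
proof (intro allI impI)
  fix "is" :: "2 list" assume "length is \<le> n"
  then have "length (is @ [i]) \<le> Suc n" by simp
  then have "\<forall>p\<in>U. dpart (is @ [i]) f differentiable at p"
    using assms unfolding sm_def by blast
  then show "\<forall>p\<in>U. dpart is (pd i f) differentiable at p" by (simp add: dpart_snoc)
qed

lemma sm_mono: "sm (Suc n) U f \<Longrightarrow> sm n U f"
  unfolding sm_def by simp

lemma sm_diff0: "sm n U f \<Longrightarrow> p \<in> U \<Longrightarrow> f differentiable at p"
proof -
  assume "sm n U f" "p \<in> U"
  then have "dpart [] f differentiable at p" unfolding sm_def by (metis le0 list.size(3))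
  then show ?thesis by simp
qed

lemma sm_snoc: "(\<And>i. sm n U (pd i f)) \<Longrightarrow> (\<And>p. p \<in> U \<Longrightarrow> f differentiable at p) \<Longrightarrow> sm (Suc n) U f"
  unfolding sm_def
proof (intro allI impI ballI)
  fix "is" :: "2 list" and p assume h: "\<And>i. \<forall>is. length is \<le> n \<longrightarrow> (\<forall>p\<in>U. dpart is (pd i f) differentiable at p)"
    "\<And>p. p \<in> U \<Longrightarrow> f differentiable at p" "length is \<le> Suc n" "p \<in> U"
  show "dpart is f differentiable at p"
  proof (cases "is" rule: rev_exhaust)
    case Nil then show ?thesis using h by simp
  next
    case (snoc ys i) then show ?thesis using h by (simp add: dpart_snoc)
  qed
qed

lemma sm_add_mult: assumes "open U"
  shows "sm n U f \<Longrightarrow> sm n U g \<Longrightarrow> sm n U (\<lambda>x. f x + g x) \<and> sm n U (\<lambda>x. f x * g x)"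
proof (induction n arbitrary: f g)
  case 0
  then show ?case unfolding sm_def by (simp add: sm_diff0[OF 0(1)] sm_diff0[OF 0(2)])
next
  case (Suc n)
  have df: "\<And>p. p \<in> U \<Longrightarrow> f differentiable at p" using sm_diff0 Suc.prems by blast
  have dg: "\<And>p. p \<in> U \<Longrightarrow> g differentiable at p" using sm_diff0 Suc.prems by blast
  have A: "sm (Suc n) U (\<lambda>x. f x + g x)"
  proof (rule sm_snoc)
    fix i
    have "sm n U (\<lambda>x. pd i f x + pd i g x)"
      using Suc.IH sm_pd Suc.prems by blast
    then show "sm n U (pd i (\<lambda>x. f x + g x))"
      by (rule sm_local[OF _ assms]) (simp add: pd_add df dg)
  qed (simp add: df dg)
  have B: "sm (Suc n) U (\<lambda>x. f x * g x)"
  proof (rule sm_snoc)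
    fix i
    have "sm n U (\<lambda>x. pd i f x * g x)" "sm n U (\<lambda>x. f x * pd i g x)"
      using Suc.IH sm_pd sm_mono Suc.prems by blast+
    then have "sm n U (\<lambda>x. pd i f x * g x + f x * pd i g x)"
      using Suc.IH by blast
    then show "sm n U (pd i (\<lambda>x. f x * g x))"
      by (rule sm_local[OF _ assms]) (simp add: pd_mult df dg)
  qed (simp add: df dg)
  show ?case using A B by blast
qed

lemma sm_const: "sm n U (\<lambda>x. c)"
proof (induction n arbitrary: c)
  case 0 then show ?case unfolding sm_def by simp
next
  case (Suc n) then show ?case
    by (intro sm_snoc) (simp_all add: pd_const[abs_def])
qed

lemma sm_inverse: assumes "open U"
  shows "sm n U f \<Longrightarrow> \<forall>q\<in>U. f q \<noteq> 0 \<Longrightarrow> sm n U (\<lambda>x. 1 / f x)"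
proof (induction n arbitrary: f)
  case 0
  then show ?case unfolding sm_def using sm_diff0[OF 0(1)] by simp
next
  case (Suc n)
  have df: "\<And>p. p \<in> U \<Longrightarrow> f differentiable at p" using sm_diff0 Suc.prems by blast
  show ?case
  proof (rule sm_snoc)
    fix i
    have i1: "sm n U (\<lambda>x. 1 / f x)" using Suc.IH Suc.prems sm_mono by blast
    have "sm n U (\<lambda>x. (-1) * pd i f x)" using sm_add_mult[OF assms] sm_const sm_pd Suc.prems by blast
    then have "sm n U (\<lambda>x. ((-1) * pd i f x) * (1 / f x))" using sm_add_mult[OF assms] i1 by blast
    then have "sm n U (\<lambda>x. ((-1) * pd i f x) * (1 / f x) * (1 / f x))" using sm_add_mult[OF assms] i1 by blast
    then show "sm n U (pd i (\<lambda>x. 1 / f x))"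
      by (rule sm_local[OF _ assms]) (simp add: pd_divide df Suc.prems pd_const power2_eq_square)
  qed (simp add: df Suc.prems)
qed

lemma smooth_add[intro]: assumes "open U" "smooth_on U f" "smooth_on U g" shows "smooth_on U (\<lambda>x. f x + g x)"
  unfolding smooth_sm
proof
  fix n show "sm n U (\<lambda>x. f x + g x)" using sm_add_mult[OF assms(1)] assms(2,3)[unfolded smooth_sm] by blast
qed
lemma smooth_mult[intro]: assumes "open U" "smooth_on U f" "smooth_on U g" shows "smooth_on U (\<lambda>x. f x * g x)"
  unfolding smooth_sm
proof
  fix n show "sm n U (\<lambda>x. f x * g x)" using sm_add_mult[OF assms(1)] assms(2,3)[unfolded smooth_sm] by blast
qed
lemma smooth_const[intro]: "smooth_on U (\<lambda>x. c)"
  unfolding smooth_sm using sm_const by blast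
lemma smooth_diff[intro]: assumes a: "open U" "smooth_on U f" "smooth_on U g" shows "smooth_on U (\<lambda>x. f x - g x)"
proof -
  have "smooth_on U (\<lambda>x. f x + (-1) * g x)" using smooth_add[OF a(1,2) smooth_mult[OF a(1) smooth_const a(3)]] .
  then show ?thesis by simp
qed
lemma smooth_divide[intro]: assumes a: "open U" "smooth_on U f" "smooth_on U g" "\<forall>q\<in>U. g q \<noteq> 0" shows "smooth_on U (\<lambda>x. f x / g x)"
proof -
  have "smooth_on U (\<lambda>x. 1 / g x)" unfolding smooth_sm
  proof
    fix n show "sm n U (\<lambda>x. 1 / g x)" using sm_inverse[OF a(1)] a(3,4)[unfolded smooth_sm] by blast
  qed
  then have "smooth_on U (\<lambda>x. f x * (1 / g x))" using smooth_mult[OF a(1,2)] by blast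
  then show ?thesis by simp
qed
lemma smooth_pd[intro]: "smooth_on U f \<Longrightarrow> smooth_on U (pd i f)"
  unfolding smooth_sm using sm_pd by blast
lemma smooth_local: "open U \<Longrightarrow> \<forall>q\<in>U. f q = g q \<Longrightarrow> smooth_on U f \<Longrightarrow> smooth_on U g"
  unfolding smooth_sm using sm_local by blast
lemma smooth_diffble: "smooth_on U f \<Longrightarrow> p \<in> U \<Longrightarrow> f differentiable at p"
  unfolding smooth_sm using sm_diff0 by blast
lemma smooth_sum2[intro]: "open U \<Longrightarrow> (\<And>k::2. smooth_on U (g k)) \<Longrightarrow> smooth_on U (\<lambda>x. \<Sum>k\<in>UNIV. g k x)"
proof -
  assume a: "open U" "\<And>k. smooth_on U (g k)"
  have "(\<lambda>x. \<Sum>k\<in>UNIV. g k x) = (\<lambda>x. g 1 x + g 2 x)" by (simp add: sum_2)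
  then show ?thesis using smooth_add[OF a(1) a(2) a(2)] by simp
qed



lemma aux_ineq: "(b::real) < a \<Longrightarrow> 0 < a \<Longrightarrow> (a + 2 * b) / 4 < a" by (simp add: field_simps)

lemma dir_deriv:
  fixes f :: "pt \<Rightarrow> real"
  assumes "f differentiable at (c + t *\<^sub>R v)"
  shows "((\<lambda>s. f (c + s *\<^sub>R v)) has_derivative (\<lambda>u. u * frechet_derivative f (at (c + t *\<^sub>R v)) v)) (at t)"
proof -
  define D where "D = frechet_derivative f (at (c + t *\<^sub>R v))"
  have h1: "((\<lambda>s. c + s *\<^sub>R v) has_derivative (\<lambda>u. u *\<^sub>R v)) (at t)"
    by (auto intro!: derivative_eq_intros)
  have h2: "(f has_derivative D) (at (c + t *\<^sub>R v))"
    using assms frechet_derivative_works D_def by blast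
  have lin: "linear D" using h2 has_derivative_linear by blast
  have "((\<lambda>s. f (c + s *\<^sub>R v)) has_derivative (\<lambda>u. D (u *\<^sub>R v))) (at t)"
    using has_derivative_compose[OF h1 h2] by simp
  moreover have "(\<lambda>u. D (u *\<^sub>R v)) = (\<lambda>u. u * D v)"
    using linear_scale[OF lin] by auto
  ultimately show ?thesis unfolding D_def by simp
qed

lemma young_lim:
  fixes f :: "pt \<Rightarrow> real"
  assumes U: "open U" "p \<in> U" and df: "\<And>q. q \<in> U \<Longrightarrow> f differentiable at q"
    and dF: "pd b f differentiable at p"
  shows "((\<lambda>h. (f (p + h *\<^sub>R axis a 1 + h *\<^sub>R axis b 1) - f (p + h *\<^sub>R axis a 1)
              - f (p + h *\<^sub>R axis b 1) + f p) / h^2) \<longlongrightarrow> pd a (pd b f) p) (at_right 0)"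
proof -
  define F where "F = pd b f"
  define ea where "ea = (axis a 1 :: pt)"
  define eb where "eb = (axis b 1 :: pt)"
  obtain L where L: "(F has_derivative L) (at p)" using dF unfolding differentiable_def F_def by blast
  have La: "L ea = pd a (pd b f) p" using pd_has[OF L] F_def ea_def by simp
  have lin: "linear L" using L has_derivative_linear by blast
  obtain R where R: "R > 0" "ball p R \<subseteq> U" using U open_contains_ball by blast
  have Fq: "\<And>q. frechet_derivative f (at q) eb = F q" unfolding F_def pd_def eb_def by simp
  show ?thesis unfolding tendsto_iff eventually_at_right_field ea_def[symmetric] eb_def[symmetric]
  proof (intro allI impI)
    fix e :: real assume e: "e > 0"
    obtain d where d: "d>0" "\<And>y. norm (y - p) < d \<Longrightarrow> norm (F y - F p - L (y - p)) \<le> (e/4) * norm (y - p)"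
      using L[unfolded has_derivative_at_alt] e by (metis divide_pos_pos zero_less_numeral)
    define bnd where "bnd = min R d / 3"
    have bnd: "bnd > 0" using R d bnd_def by simp
    have "\<forall>h>0. h < bnd \<longrightarrow> dist ((f (p + h *\<^sub>R ea + h *\<^sub>R eb) - f (p + h *\<^sub>R ea)
              - f (p + h *\<^sub>R eb) + f p) / h^2) (pd a (pd b f) p) < e"
    proof (intro allI impI)
      fix h :: real assume h: "0 < h" "h < bnd"
      have nrm: "\<And>s t. 0 \<le> s \<Longrightarrow> s \<le> h \<Longrightarrow> 0 \<le> t \<Longrightarrow> t \<le> h \<Longrightarrow> norm (s *\<^sub>R ea + t *\<^sub>R eb) \<le> s + t"
      proof -
        fix s t :: real assume st: "0 \<le> s" "s \<le> h" "0 \<le> t" "t \<le> h"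
        have "norm (s *\<^sub>R ea + t *\<^sub>R eb) \<le> norm (s *\<^sub>R ea) + norm (t *\<^sub>R eb)" by (rule norm_triangle_ineq)
        also have "\<dots> = s + t" using st by (simp add: ea_def eb_def)
        finally show "norm (s *\<^sub>R ea + t *\<^sub>R eb) \<le> s + t" .
      qed
      have inU: "\<And>s t. 0 \<le> s \<Longrightarrow> s \<le> h \<Longrightarrow> 0 \<le> t \<Longrightarrow> t \<le> h \<Longrightarrow> p + s *\<^sub>R ea + t *\<^sub>R eb \<in> U"
      proof -
        fix s t :: real assume st: "0 \<le> s" "s \<le> h" "0 \<le> t" "t \<le> h"
        have "norm (s *\<^sub>R ea + t *\<^sub>R eb) < R" using nrm[OF st] st h bnd_def by linarith
        moreover have "dist p (p + s *\<^sub>R ea + t *\<^sub>R eb) = norm (s *\<^sub>R ea + t *\<^sub>R eb)"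
          using norm_minus_cancel[of "s *\<^sub>R ea + t *\<^sub>R eb"] by (simp add: dist_norm add.assoc)
        ultimately have "p + s *\<^sub>R ea + t *\<^sub>R eb \<in> ball p R" by simp
        then show "p + s *\<^sub>R ea + t *\<^sub>R eb \<in> U" using R by blast
      qed
      define g where "g t = f (p + h *\<^sub>R ea + t *\<^sub>R eb) - f (p + t *\<^sub>R eb)" for t
      have gder: "(g has_derivative (\<lambda>u. u * (F (p + h *\<^sub>R ea + t *\<^sub>R eb) - F (p + t *\<^sub>R eb)))) (at t within {0..h})"
        if t: "0 \<le> t" "t \<le> h" for t
      proof -
        have i1: "p + h *\<^sub>R ea + t *\<^sub>R eb \<in> U" using inU[of h t] t h by simp
        have i2: "p + t *\<^sub>R eb \<in> U" using inU[of 0 t] t h by simp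
        have d1: "((\<lambda>s. f (p + h *\<^sub>R ea + s *\<^sub>R eb)) has_derivative (\<lambda>u. u * F (p + h *\<^sub>R ea + t *\<^sub>R eb))) (at t)"
          using dir_deriv[of f "p + h *\<^sub>R ea" t eb] df[OF i1] Fq by simp
        have d2: "((\<lambda>s. f (p + s *\<^sub>R eb)) has_derivative (\<lambda>u. u * F (p + t *\<^sub>R eb))) (at t)"
          using dir_deriv[of f "p" t eb] df[OF i2] Fq by simp
        have "(g has_derivative (\<lambda>u. u * F (p + h *\<^sub>R ea + t *\<^sub>R eb) - u * F (p + t *\<^sub>R eb))) (at t)"
          unfolding g_def using has_derivative_diff[OF d1 d2] by simp
        then show ?thesis by (simp add: right_diff_distrib has_derivative_at_withinI)
      qed
      obtain \<theta> where th: "\<theta> \<in> {0<..<h}" "g h - g 0 = (h - 0) * (F (p + h *\<^sub>R ea + \<theta> *\<^sub>R eb) - F (p + \<theta> *\<^sub>R eb))"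
        using mvt_simple[OF h(1), of g, OF gder] by auto
      define y1 where "y1 = p + h *\<^sub>R ea + \<theta> *\<^sub>R eb"
      define y2 where "y2 = p + \<theta> *\<^sub>R eb"
      have Delta: "f (p + h *\<^sub>R ea + h *\<^sub>R eb) - f (p + h *\<^sub>R ea) - f (p + h *\<^sub>R eb) + f p = h * (F y1 - F y2)"
        using th(2) unfolding g_def y1_def y2_def by simp
      have n1: "norm (y1 - p) \<le> h + \<theta>" using nrm[of h \<theta>] th h unfolding y1_def by (simp add: algebra_simps)
      have n2: "norm (y2 - p) \<le> \<theta>" using th unfolding y2_def by (simp add: eb_def)
      have b1: "norm (F y1 - F p - L (y1 - p)) \<le> (e/4) * norm (y1 - p)"
        using d(2)[of y1] n1 th h bnd_def by auto
      have b2: "norm (F y2 - F p - L (y2 - p)) \<le> (e/4) * norm (y2 - p)"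
        using d(2)[of y2] n2 th h bnd_def by auto
      have Ldiff: "L (y1 - p) - L (y2 - p) = h * L ea"
      proof -
        have e: "y1 - p = h *\<^sub>R ea + (y2 - p)" unfolding y1_def y2_def by (simp add: algebra_simps)
        have "L (y1 - p) = L (h *\<^sub>R ea + (y2 - p))" by (simp only: e)
        also have "\<dots> = L (h *\<^sub>R ea) + L (y2 - p)" by (rule linear_add[OF lin])
        finally have "L (y1 - p) = L (h *\<^sub>R ea) + L (y2 - p)" .
        then show ?thesis using linear_scale[OF lin] by simp
      qed
      have key: "\<bar>F y1 - F y2 - h * L ea\<bar> \<le> (e/4) * (h + \<theta>) + (e/4) * \<theta>"
      proof -
        have "F y1 - F y2 - h * L ea = (F y1 - F p - L (y1 - p)) - (F y2 - F p - L (y2 - p))"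
          using Ldiff by simp
        then have "\<bar>F y1 - F y2 - h * L ea\<bar> \<le> \<bar>F y1 - F p - L (y1 - p)\<bar> + \<bar>F y2 - F p - L (y2 - p)\<bar>"
          by linarith
        also have "\<dots> \<le> (e/4) * norm (y1 - p) + (e/4) * norm (y2 - p)" using b1 b2 by simp
        also have "\<dots> \<le> (e/4) * (h + \<theta>) + (e/4) * \<theta>"
          using n1 n2 e by (intro add_mono mult_left_mono) auto
        finally show ?thesis .
      qed
      have x1: "e * \<theta> < e * h" using th e by (intro mult_strict_left_mono) auto
      have eq2: "(e/4) * (h + \<theta>) + (e/4) * \<theta> = (e * h + 2 * (e * \<theta>)) / 4" by (simp add: algebra_simps)
      have x2: "0 < e * h" using e h by simp
      have "(e * h + 2 * (e * \<theta>)) / 4 < e * h" by (rule aux_ineq[OF x1 x2])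
      then have "(e/4) * (h + \<theta>) + (e/4) * \<theta> < e * h" unfolding eq2 .
      then have key2: "\<bar>F y1 - F y2 - h * L ea\<bar> < e * h" using key by linarith
      have "(h * (F y1 - F y2)) / h^2 - L ea = (F y1 - F y2 - h * L ea) / h"
        using h by (simp add: power2_eq_square field_simps)
      then have "dist ((h * (F y1 - F y2)) / h^2) (L ea) = \<bar>F y1 - F y2 - h * L ea\<bar> / h"
        using h by (simp add: dist_real_def)
      also have "\<dots> < e" using key2 h by (simp add: divide_less_eq)
      finally show "dist ((f (p + h *\<^sub>R ea + h *\<^sub>R eb) - f (p + h *\<^sub>R ea)
              - f (p + h *\<^sub>R eb) + f p) / h^2) (pd a (pd b f) p) < e"
        using Delta La by simp
    qed
    then show "\<exists>bb>0. \<forall>h>0. h < bb \<longrightarrow> dist ((f (p + h *\<^sub>R ea + h *\<^sub>R eb) - f (p + h *\<^sub>R ea)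
              - f (p + h *\<^sub>R eb) + f p) / h^2) (pd a (pd b f) p) < e"
      using bnd by blast
  qed
qed

lemma clairaut:
  fixes f :: "pt \<Rightarrow> real"
  assumes U: "open U" "p \<in> U" and sf: "smooth_on U f"
  shows "pd a (pd b f) p = pd b (pd a f) p"
proof -
  have df: "\<And>q. q \<in> U \<Longrightarrow> f differentiable at q" using sf smooth_diffble by blast
  have l1: "((\<lambda>h. (f (p + h *\<^sub>R axis a 1 + h *\<^sub>R axis b 1) - f (p + h *\<^sub>R axis a 1)
              - f (p + h *\<^sub>R axis b 1) + f p) / h^2) \<longlongrightarrow> pd a (pd b f) p) (at_right 0)"
    using young_lim[OF U df] smooth_diffble[OF smooth_pd[OF sf] U(2)] by blast
  have l2: "((\<lambda>h. (f (p + h *\<^sub>R axis b 1 + h *\<^sub>R axis a 1) - f (p + h *\<^sub>R axis b 1)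
              - f (p + h *\<^sub>R axis a 1) + f p) / h^2) \<longlongrightarrow> pd b (pd a f) p) (at_right 0)"
    using young_lim[OF U df] smooth_diffble[OF smooth_pd[OF sf] U(2)] by blast
  have eq: "(\<lambda>h. (f (p + h *\<^sub>R axis b 1 + h *\<^sub>R axis a 1) - f (p + h *\<^sub>R axis b 1)
              - f (p + h *\<^sub>R axis a 1) + f p) / h^2) = (\<lambda>h. (f (p + h *\<^sub>R axis a 1 + h *\<^sub>R axis b 1) - f (p + h *\<^sub>R axis a 1)
              - f (p + h *\<^sub>R axis b 1) + f p) / h^2)"
    by (simp add: add_ac algebra_simps)
  show ?thesis using tendsto_unique[OF trivial_limit_at_right_real l1 l2[unfolded eq]] .
qed



lemma pd_cmult: "f differentiable at p \<Longrightarrow> pd i (\<lambda>x. c * f x) p = c * pd i f p"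
  using pd_mult[of "\<lambda>x. c" p f i] by (simp add: pd_const)

lemma curv_eq: "curv \<Gamma> l k i j = (\<lambda>p. pd i (\<Gamma> l j k) p - pd j (\<Gamma> l i k) p
     + (\<Sum>m\<in>UNIV. \<Gamma> l i m p * \<Gamma> m j k p - \<Gamma> l j m p * \<Gamma> m i k p))"
  by (rule ext) (simp add: curv_def)

lemma ricci_eq: "ricci \<Gamma> j k = (\<lambda>p. \<Sum>i\<in>UNIV. curv \<Gamma> i k i j p)"
  by (rule ext) (simp add: ricci_def)

lemma cov1_eq: "cov1 \<Gamma> \<xi> i j = (\<lambda>p. pd i (\<xi> j) p - (\<Sum>k\<in>UNIV. \<Gamma> k i j p * \<xi> k p))"
  by (rule ext) (simp add: cov1_def)

lemma curv_ricci: "curv \<Gamma> m l i j p = (if m = i then ricci \<Gamma> j l p else 0) - (if m = j then ricci \<Gamma> i l p else 0)"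
proof -
  have sk: "\<And>m l i j. curv \<Gamma> m l i j p = - curv \<Gamma> m l j i p" by (simp add: curv_def sum_2 algebra_simps)
  have z: "\<And>m l i. curv \<Gamma> m l i i p = 0" by (simp add: curv_def)
  show ?thesis
    using exhaust_2[of m] exhaust_2[of i] exhaust_2[of j]
    by (auto simp: ricci_def sum_2 z sk[of _ _ 2 1])
qed

definition ff :: "(2 \<Rightarrow> 2 \<Rightarrow> 2 \<Rightarrow> pt \<Rightarrow> real) \<Rightarrow> (2 \<Rightarrow> pt \<Rightarrow> real) \<Rightarrow> pt \<Rightarrow> real" where
  "ff \<Gamma> \<xi> x = (pd 1 (\<xi> 2) x - pd 2 (\<xi> 1) x) / (2 * ricci \<Gamma> 1 2 x)"

definition phi0 :: "(2 \<Rightarrow> 2 \<Rightarrow> 2 \<Rightarrow> pt \<Rightarrow> real) \<Rightarrow> 2 \<Rightarrow> pt \<Rightarrow> real" where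
  "phi0 \<Gamma> i x = pd i (ricci \<Gamma> 1 2) x / ricci \<Gamma> 1 2 x - (\<Gamma> 1 i 1 x + \<Gamma> 2 i 2 x)"

definition w0 :: "(2 \<Rightarrow> 2 \<Rightarrow> 2 \<Rightarrow> pt \<Rightarrow> real) \<Rightarrow> 2 \<Rightarrow> pt \<Rightarrow> real" where
  "w0 \<Gamma> k x = (if k = 1 then phi0 \<Gamma> 2 x / ricci \<Gamma> 1 2 x else - phi0 \<Gamma> 1 x / ricci \<Gamma> 1 2 x)"

definition eta :: "(2 \<Rightarrow> 2 \<Rightarrow> 2 \<Rightarrow> pt \<Rightarrow> real) \<Rightarrow> (2 \<Rightarrow> pt \<Rightarrow> real) \<Rightarrow> 2 \<Rightarrow> pt \<Rightarrow> real" where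
  "eta \<Gamma> \<xi> l x = \<xi> l x + pd l (ff \<Gamma> \<xi>) x + ff \<Gamma> \<xi> x * phi \<Gamma> l x"

locale geo =
  fixes U :: "pt set" and \<Gamma> :: "2 \<Rightarrow> 2 \<Rightarrow> 2 \<Rightarrow> pt \<Rightarrow> real" and \<xi> :: "2 \<Rightarrow> pt \<Rightarrow> real"
  assumes U_open: "open U"
    and \<Gamma>_smooth: "\<And>k i j. smooth_on U (\<Gamma> k i j)"
    and torsion_free: "\<And>k i j p. p \<in> U \<Longrightarrow> \<Gamma> k i j p = \<Gamma> k j i p"
    and ricci_skew: "\<And>i j p. p \<in> U \<Longrightarrow> ricci \<Gamma> j i p = - ricci \<Gamma> i j p"
    and ricci_nonzero: "\<And>p. p \<in> U \<Longrightarrow> \<exists>i j. ricci \<Gamma> i j p \<noteq> 0"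
    and \<xi>_smooth: "\<And>i. smooth_on U (\<xi> i)"
begin

lemma ricci_diag: "q \<in> U \<Longrightarrow> ricci \<Gamma> i i q = 0"
  using ricci_skew[of q i i] by simp

lemma ricci_21: "q \<in> U \<Longrightarrow> ricci \<Gamma> 2 1 q = - ricci \<Gamma> 1 2 q"
  using ricci_skew[of q 1 2] by simp

lemma r_nz: "q \<in> U \<Longrightarrow> ricci \<Gamma> 1 2 q \<noteq> 0"
proof -
  assume q: "q \<in> U"
  obtain i j where "ricci \<Gamma> i j q \<noteq> 0" using ricci_nonzero[OF q] by blast
  show ?thesis
  proof
    assume z: "ricci \<Gamma> 1 2 q = 0"
    have "ricci \<Gamma> i j q = 0"
    proof (cases "i = j")
      case True then show ?thesis using ricci_diag[OF q] by simp
    next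
      case False
      then have "(i = 1 \<and> j = 2) \<or> (i = 2 \<and> j = 1)" using exhaust_2[of i] exhaust_2[of j] by fastforce
      then show ?thesis using z ricci_21[OF q] by (elim disjE) simp_all
    qed
    then show False using \<open>ricci \<Gamma> i j q \<noteq> 0\<close> by simp
  qed
qed

lemma ricci_vals: "q \<in> U \<Longrightarrow> ricci \<Gamma> 1 1 q = 0 \<and> ricci \<Gamma> 2 2 q = 0 \<and> ricci \<Gamma> 2 1 q = - ricci \<Gamma> 1 2 q"
  using ricci_diag ricci_21 by blast

lemma sm_curv: "smooth_on U (curv \<Gamma> l k i j)"
  unfolding curv_eq
  by (intro smooth_add smooth_diff smooth_mult smooth_sum2 smooth_pd U_open \<Gamma>_smooth)

lemma sm_ricci: "smooth_on U (ricci \<Gamma> j k)"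
  unfolding ricci_eq by (intro smooth_sum2 U_open sm_curv)

lemma sm_r: "smooth_on U (ricci \<Gamma> 1 2)" by (rule sm_ricci)

lemma sm_phi0: "smooth_on U (phi0 \<Gamma> i)"
proof -
  have "smooth_on U (\<lambda>x. pd i (ricci \<Gamma> 1 2) x / ricci \<Gamma> 1 2 x - (\<Gamma> 1 i 1 x + \<Gamma> 2 i 2 x))"
    using r_nz by (intro smooth_add smooth_diff smooth_divide smooth_pd U_open \<Gamma>_smooth sm_r) auto
  then show ?thesis unfolding phi0_def[abs_def] .
qed

lemma sm_w0: "smooth_on U (w0 \<Gamma> k)"
proof (cases "k = 1")
  case True
  have "smooth_on U (\<lambda>x. phi0 \<Gamma> 2 x / ricci \<Gamma> 1 2 x)"
    using r_nz by (intro smooth_divide U_open sm_phi0 sm_r) auto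
  then show ?thesis using True unfolding w0_def[abs_def] by simp
next
  case False
  have "smooth_on U (\<lambda>x. (0 - phi0 \<Gamma> 1 x) / ricci \<Gamma> 1 2 x)"
    using r_nz by (intro smooth_divide smooth_diff smooth_const U_open sm_phi0 sm_r) auto
  then show ?thesis using False unfolding w0_def[abs_def] by simp
qed

lemma sm_ff: "smooth_on U (ff \<Gamma> \<xi>)"
proof -
  have "smooth_on U (\<lambda>x. (pd 1 (\<xi> 2) x - pd 2 (\<xi> 1) x) / (2 * ricci \<Gamma> 1 2 x))"
    using r_nz by (intro smooth_divide smooth_diff smooth_mult smooth_const smooth_pd U_open \<xi>_smooth sm_r) auto
  then show ?thesis unfolding ff_def[abs_def] .
qed

lemma sm_cov1: "smooth_on U (cov1 \<Gamma> \<xi> i j)"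
  unfolding cov1_eq
  by (intro smooth_diff smooth_mult smooth_sum2 smooth_pd U_open \<Gamma>_smooth \<xi>_smooth)

lemma dG_sym: "q \<in> U \<Longrightarrow> pd a (\<Gamma> k i j) q = pd a (\<Gamma> k j i) q"
  using pd_local[OF U_open, of q "\<Gamma> k i j" "\<Gamma> k j i"] torsion_free by blast

lemma phi_char: assumes q: "q \<in> U"
  shows "phi \<Gamma> i q = phi0 \<Gamma> i q" and "cov2 \<Gamma> (ricci \<Gamma>) i j k q = phi0 \<Gamma> i q * ricci \<Gamma> j k q"
proof -
  have rd: "ricci \<Gamma> 1 2 differentiable at q" using smooth_diffble[OF sm_r q] .
  have d11: "pd i (ricci \<Gamma> 1 1) q = 0"
    using pd_local[OF U_open q, of "ricci \<Gamma> 1 1" "\<lambda>x. 0"] ricci_diag pd_const by auto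
  have d22: "pd i (ricci \<Gamma> 2 2) q = 0"
    using pd_local[OF U_open q, of "ricci \<Gamma> 2 2" "\<lambda>x. 0"] ricci_diag pd_const by auto
  have d21: "pd i (ricci \<Gamma> 2 1) q = - pd i (ricci \<Gamma> 1 2) q"
  proof -
    have "pd i (ricci \<Gamma> 2 1) q = pd i (\<lambda>x. (-1) * ricci \<Gamma> 1 2 x) q"
      using pd_local[OF U_open q, of "ricci \<Gamma> 2 1" "\<lambda>x. (-1) * ricci \<Gamma> 1 2 x"] ricci_21 by auto
    also have "\<dots> = (-1) * pd i (ricci \<Gamma> 1 2) q" by (rule pd_cmult[OF rd])
    finally show ?thesis by simp
  qed
  have rv: "ricci \<Gamma> 1 1 q = 0" "ricci \<Gamma> 2 2 q = 0" "ricci \<Gamma> 2 1 q = - ricci \<Gamma> 1 2 q"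
    using ricci_vals[OF q] by auto
  have nz: "ricci \<Gamma> 1 2 q \<noteq> 0" using r_nz[OF q] .
  have ph0r: "phi0 \<Gamma> i q * ricci \<Gamma> 1 2 q = pd i (ricci \<Gamma> 1 2) q - (\<Gamma> 1 i 1 q + \<Gamma> 2 i 2 q) * ricci \<Gamma> 1 2 q"
    using nz unfolding phi0_def by (simp add: left_diff_distrib)
  have c12: "cov2 \<Gamma> (ricci \<Gamma>) i 1 2 q = phi0 \<Gamma> i q * ricci \<Gamma> 1 2 q"
    unfolding ph0r by (simp add: cov2_def sum_2 rv algebra_simps)
  have c21: "cov2 \<Gamma> (ricci \<Gamma>) i 2 1 q = phi0 \<Gamma> i q * ricci \<Gamma> 2 1 q"
    unfolding rv(3) using ph0r by (simp add: cov2_def sum_2 rv d21 algebra_simps)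
  have c11: "cov2 \<Gamma> (ricci \<Gamma>) i 1 1 q = phi0 \<Gamma> i q * ricci \<Gamma> 1 1 q"
    by (simp add: cov2_def sum_2 rv d11)
  have c22: "cov2 \<Gamma> (ricci \<Gamma>) i 2 2 q = phi0 \<Gamma> i q * ricci \<Gamma> 2 2 q"
    by (simp add: cov2_def sum_2 rv d22)
  have all: "\<forall>j k. cov2 \<Gamma> (ricci \<Gamma>) i j k q = phi0 \<Gamma> i q * ricci \<Gamma> j k q"
  proof (intro allI)
    fix j k :: 2
    show "cov2 \<Gamma> (ricci \<Gamma>) i j k q = phi0 \<Gamma> i q * ricci \<Gamma> j k q"
      using exhaust_2[of j] exhaust_2[of k] c11 c12 c21 c22 by auto
  qed
  then show "cov2 \<Gamma> (ricci \<Gamma>) i j k q = phi0 \<Gamma> i q * ricci \<Gamma> j k q" by blast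
  show "phi \<Gamma> i q = phi0 \<Gamma> i q"
    unfolding phi_def
  proof (rule the_equality)
    show "\<forall>j k. cov2 \<Gamma> (ricci \<Gamma>) i j k q = phi0 \<Gamma> i q * ricci \<Gamma> j k q" by (rule all)
  next
    fix c assume "\<forall>j k. cov2 \<Gamma> (ricci \<Gamma>) i j k q = c * ricci \<Gamma> j k q"
    then have "c * ricci \<Gamma> 1 2 q = phi0 \<Gamma> i q * ricci \<Gamma> 1 2 q" using c12 by simp
    then show "c = phi0 \<Gamma> i q" using nz by simp
  qed
qed

lemma phi_diff: "q \<in> U \<Longrightarrow> phi \<Gamma> i differentiable at q"
  using diff_local[OF U_open, of q "phi0 \<Gamma> i" "phi \<Gamma> i"] phi_char(1) smooth_diffble[OF sm_phi0] by auto

lemma pd_phi: "q \<in> U \<Longrightarrow> pd a (phi \<Gamma> i) q = pd a (phi0 \<Gamma> i) q"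
  using pd_local[OF U_open, of q "phi \<Gamma> i" "phi0 \<Gamma> i"] phi_char(1) by auto

lemma wvec_char: assumes q: "q \<in> U" shows "wvec \<Gamma> k q = w0 \<Gamma> k q"
proof -
  have nz: "ricci \<Gamma> 1 2 q \<noteq> 0" using r_nz[OF q] .
  have rv: "ricci \<Gamma> 1 1 q = 0" "ricci \<Gamma> 2 2 q = 0" "ricci \<Gamma> 2 1 q = - ricci \<Gamma> 1 2 q"
    using ricci_vals[OF q] by auto
  have ph: "\<And>i. phi \<Gamma> i q = phi0 \<Gamma> i q" using phi_char(1)[OF q] by blast
  have all: "\<forall>j. phi \<Gamma> j q = (\<Sum>i\<in>UNIV. ricci \<Gamma> i j q * w0 \<Gamma> i q)"
  proof
    fix j :: 2 show "phi \<Gamma> j q = (\<Sum>i\<in>UNIV. ricci \<Gamma> i j q * w0 \<Gamma> i q)"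
      using exhaust_2[of j] nz by (auto simp: sum_2 rv ph w0_def)
  qed
  have "(THE v. \<forall>j. phi \<Gamma> j q = (\<Sum>i\<in>UNIV. ricci \<Gamma> i j q * v i)) = (\<lambda>i. w0 \<Gamma> i q)"
  proof (rule the_equality)
    show "\<forall>j. phi \<Gamma> j q = (\<Sum>i\<in>UNIV. ricci \<Gamma> i j q * w0 \<Gamma> i q)" by (rule all)
  next
    fix v :: "2 \<Rightarrow> real" assume h: "\<forall>j. phi \<Gamma> j q = (\<Sum>i\<in>UNIV. ricci \<Gamma> i j q * v i)"
    have "v 1 = w0 \<Gamma> 1 q" using h[rule_format, of 2] all[rule_format, of 2] nz by (simp add: sum_2 rv)
    moreover have "v 2 = w0 \<Gamma> 2 q" using h[rule_format, of 1] all[rule_format, of 1] nz by (simp add: sum_2 rv)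
    ultimately show "v = (\<lambda>i. w0 \<Gamma> i q)"
    proof -
      assume a: "v 1 = w0 \<Gamma> 1 q" "v 2 = w0 \<Gamma> 2 q"
      show ?thesis
      proof
        fix k :: 2 show "v k = w0 \<Gamma> k q" using exhaust_2[of k] a by auto
      qed
    qed
  qed
  then show ?thesis unfolding wvec_def by simp
qed

end


lemma ricci_alg:
  fixes G :: "2\<Rightarrow>2\<Rightarrow>2\<Rightarrow>real" and dG :: "2\<Rightarrow>2\<Rightarrow>2\<Rightarrow>2\<Rightarrow>real" and X :: "2\<Rightarrow>real"
    and dX :: "2\<Rightarrow>2\<Rightarrow>real" and ddX :: "2\<Rightarrow>2\<Rightarrow>2\<Rightarrow>real" and C1 :: "2\<Rightarrow>2\<Rightarrow>real" and dC1 :: "2\<Rightarrow>2\<Rightarrow>2\<Rightarrow>real"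
  assumes sG: "\<And>k. G k 2 1 = G k 1 2" and sdG: "\<And>a k. dG a k 2 1 = dG a k 1 2" and sX: "\<And>c. ddX 2 1 c = ddX 1 2 c"
    and C1: "\<And>j l. C1 j l = dX j l - (\<Sum>k\<in>UNIV. G k j l * X k)"
    and dC1: "\<And>a j l. dC1 a j l = ddX a j l - (\<Sum>k\<in>UNIV. dG a k j l * X k + G k j l * dX a k)"
  shows "(dC1 i j l - (\<Sum>k\<in>UNIV. G k i j * C1 k l) - (\<Sum>k\<in>UNIV. G k i l * C1 j k))
       - (dC1 j i l - (\<Sum>k\<in>UNIV. G k j i * C1 k l) - (\<Sum>k\<in>UNIV. G k j l * C1 i k))
       = - (\<Sum>m\<in>UNIV. (dG i m j l - dG j m i l + (\<Sum>k\<in>UNIV. G m i k * G k j l - G m j k * G k i l)) * X m)"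
proof -
  have "\<forall>i j l. (dC1 i j l - (\<Sum>k\<in>UNIV. G k i j * C1 k l) - (\<Sum>k\<in>UNIV. G k i l * C1 j k))
       - (dC1 j i l - (\<Sum>k\<in>UNIV. G k j i * C1 k l) - (\<Sum>k\<in>UNIV. G k j l * C1 i k))
       = - (\<Sum>m\<in>UNIV. (dG i m j l - dG j m i l + (\<Sum>k\<in>UNIV. G m i k * G k j l - G m j k * G k i l)) * X m)"
    unfolding forall_2 by (simp add: sum_2 C1 dC1 sG sdG sX algebra_simps)
  then show ?thesis by blast
qed



lemma pd_divc: "f differentiable at p \<Longrightarrow> pd i (\<lambda>x. f x / c) p = pd i f p / c"
  using pd_cmult[of f p i "1/c"] by simp

lemma sum_if2: "(\<Sum>m\<in>UNIV. ((if m = i then A else 0) - (if m = j then B else 0)) * X m) = A * X i - B * (X (j::2) :: real)"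
proof -
  have "\<forall>i j::2. (\<Sum>m\<in>UNIV. ((if m = i then A else 0) - (if m = j then B else 0)) * X m) = A * X i - B * X j"
    unfolding forall_2 by (simp add: sum_2 algebra_simps)
  then show ?thesis by blast
qed

context geo begin

lemma diffs: assumes q: "q \<in> U"
  shows "\<Gamma> k i j differentiable at q" "\<xi> k differentiable at q" "pd a (\<xi> k) differentiable at q"
    "ff \<Gamma> \<xi> differentiable at q" "pd a (ff \<Gamma> \<xi>) differentiable at q" "ricci \<Gamma> j k differentiable at q"
    "cov1 \<Gamma> \<xi> j k differentiable at q" "w0 \<Gamma> k differentiable at q" "phi \<Gamma> k differentiable at q"
    "pd a (ricci \<Gamma> 1 2) differentiable at q"
  using smooth_diffble[OF \<Gamma>_smooth q] smooth_diffble[OF \<xi>_smooth q] smooth_diffble[OF smooth_pd[OF \<xi>_smooth] q]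
    smooth_diffble[OF sm_ff q] smooth_diffble[OF smooth_pd[OF sm_ff] q] smooth_diffble[OF sm_ricci q]
    smooth_diffble[OF sm_cov1 q] smooth_diffble[OF sm_w0 q] phi_diff[OF q] smooth_diffble[OF smooth_pd[OF sm_r] q]
  by this

lemma pd_cov1: assumes q: "q \<in> U"
  shows "pd a (cov1 \<Gamma> \<xi> j l) q = pd a (pd j (\<xi> l)) q - (\<Sum>k\<in>UNIV. pd a (\<Gamma> k j l) q * \<xi> k q + \<Gamma> k j l q * pd a (\<xi> k) q)"
proof -
  have e: "cov1 \<Gamma> \<xi> j l = (\<lambda>p. pd j (\<xi> l) p - (\<Gamma> 1 j l p * \<xi> 1 p + \<Gamma> 2 j l p * \<xi> 2 p))"
    by (rule ext) (simp add: cov1_def sum_2)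
  show ?thesis unfolding e using diffs[OF q]
    by (simp add: pd_diff pd_add pd_mult sum_2)
qed

lemma ricci_identity: assumes q: "q \<in> U"
  shows "cov2 \<Gamma> (cov1 \<Gamma> \<xi>) i j l q - cov2 \<Gamma> (cov1 \<Gamma> \<xi>) j i l q = -(ricci \<Gamma> j l q * \<xi> i q - ricci \<Gamma> i l q * \<xi> j q)"
proof -
  have sX: "\<And>c. pd 2 (pd 1 (\<xi> c)) q = pd 1 (pd 2 (\<xi> c)) q"
    using clairaut[OF U_open q \<xi>_smooth] by blast
  have sG: "\<And>k. \<Gamma> k 2 1 q = \<Gamma> k 1 2 q" using torsion_free[OF q] by blast
  have sdG: "\<And>a k. pd a (\<Gamma> k 2 1) q = pd a (\<Gamma> k 1 2) q" using dG_sym[OF q] by blast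
  have A: "cov2 \<Gamma> (cov1 \<Gamma> \<xi>) i j l q - cov2 \<Gamma> (cov1 \<Gamma> \<xi>) j i l q
     = - (\<Sum>m\<in>UNIV. (pd i (\<Gamma> m j l) q - pd j (\<Gamma> m i l) q + (\<Sum>k\<in>UNIV. \<Gamma> m i k q * \<Gamma> k j l q - \<Gamma> m j k q * \<Gamma> k i l q)) * \<xi> m q)"
    unfolding cov2_def
    by (rule ricci_alg[where G="\<lambda>k i j. \<Gamma> k i j q" and dG="\<lambda>a k i j. pd a (\<Gamma> k i j) q" and X="\<lambda>k. \<xi> k q"
          and dX="\<lambda>a k. pd a (\<xi> k) q" and ddX="\<lambda>a b c. pd a (pd b (\<xi> c)) q", OF sG sdG sX])
       (simp add: cov1_def, rule pd_cov1[OF q])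
  also have "\<dots> = - (\<Sum>m\<in>UNIV. curv \<Gamma> m l i j q * \<xi> m q)" by (simp add: curv_def)
  also have "\<dots> = -(ricci \<Gamma> j l q * \<xi> i q - ricci \<Gamma> i l q * \<xi> j q)"
    unfolding curv_ricci sum_if2 ..
  finally show ?thesis .
qed

lemma ffr: assumes q: "q \<in> U"
  shows "ff \<Gamma> \<xi> q * ricci \<Gamma> 1 2 q = (pd 1 (\<xi> 2) q - pd 2 (\<xi> 1) q) / 2"
  using r_nz[OF q] by (simp add: ff_def)

lemma killing_eq: assumes q: "q \<in> U"
  shows "killing \<Gamma> \<xi> j l q = cov1 \<Gamma> \<xi> j l q - ff \<Gamma> \<xi> q * ricci \<Gamma> j l q"
proof -
  have sG: "\<And>k. \<Gamma> k 2 1 q = \<Gamma> k 1 2 q" using torsion_free[OF q] by blast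
  have rv: "ricci \<Gamma> 1 1 q = 0" "ricci \<Gamma> 2 2 q = 0" "ricci \<Gamma> 2 1 q = - ricci \<Gamma> 1 2 q"
    using ricci_vals[OF q] by auto
  have f: "pd 1 (\<xi> 2) q = pd 2 (\<xi> 1) q + 2 * (ff \<Gamma> \<xi> q * ricci \<Gamma> 1 2 q)" using ffr[OF q] by simp
  have "\<forall>j l. killing \<Gamma> \<xi> j l q = cov1 \<Gamma> \<xi> j l q - ff \<Gamma> \<xi> q * ricci \<Gamma> j l q"
    unfolding forall_2 by (simp add: killing_def cov1_def sum_2 sG rv f field_simps)
  then show ?thesis by blast
qed

lemma R2: assumes q: "q \<in> U"
  shows "cov2 \<Gamma> (killing \<Gamma> \<xi>) i j l q = cov2 \<Gamma> (cov1 \<Gamma> \<xi>) i j l q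
          - (pd i (ff \<Gamma> \<xi>) q + ff \<Gamma> \<xi> q * phi \<Gamma> i q) * ricci \<Gamma> j l q"
proof -
  have pk: "pd i (killing \<Gamma> \<xi> j l) q = pd i (cov1 \<Gamma> \<xi> j l) q - (pd i (ff \<Gamma> \<xi>) q * ricci \<Gamma> j l q + ff \<Gamma> \<xi> q * pd i (ricci \<Gamma> j l) q)"
  proof -
    have "pd i (killing \<Gamma> \<xi> j l) q = pd i (\<lambda>x. cov1 \<Gamma> \<xi> j l x - ff \<Gamma> \<xi> x * ricci \<Gamma> j l x) q"
      by (rule pd_local[OF U_open q]) (simp add: killing_eq)
    also have "\<dots> = pd i (cov1 \<Gamma> \<xi> j l) q - (pd i (ff \<Gamma> \<xi>) q * ricci \<Gamma> j l q + ff \<Gamma> \<xi> q * pd i (ricci \<Gamma> j l) q)"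
      using diffs[OF q] by (simp add: pd_diff pd_mult)
    finally show ?thesis .
  qed
  have pr: "pd i (ricci \<Gamma> j l) q = phi \<Gamma> i q * ricci \<Gamma> j l q + (\<Sum>k\<in>UNIV. \<Gamma> k i j q * ricci \<Gamma> k l q) + (\<Sum>k\<in>UNIV. \<Gamma> k i l q * ricci \<Gamma> j k q)"
    using phi_char(2)[OF q, of i j l] phi_char(1)[OF q, of i] by (simp add: cov2_def)
  show ?thesis
    unfolding cov2_def pk pr by (simp add: killing_eq[OF q] sum_2 algebra_simps)
qed

lemma dnabla_eq: assumes q: "q \<in> U"
  shows "dnabla \<Gamma> (killing \<Gamma> \<xi>) i j l q = eta \<Gamma> \<xi> j q * ricci \<Gamma> i l q - eta \<Gamma> \<xi> i q * ricci \<Gamma> j l q"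
proof -
  have "dnabla \<Gamma> (killing \<Gamma> \<xi>) i j l q = (cov2 \<Gamma> (cov1 \<Gamma> \<xi>) i j l q - cov2 \<Gamma> (cov1 \<Gamma> \<xi>) j i l q)
      - (pd i (ff \<Gamma> \<xi>) q + ff \<Gamma> \<xi> q * phi \<Gamma> i q) * ricci \<Gamma> j l q
      + (pd j (ff \<Gamma> \<xi>) q + ff \<Gamma> \<xi> q * phi \<Gamma> j q) * ricci \<Gamma> i l q"
    unfolding dnabla_def R2[OF q] by simp
  also have "\<dots> = eta \<Gamma> \<xi> j q * ricci \<Gamma> i l q - eta \<Gamma> \<xi> i q * ricci \<Gamma> j l q"
    unfolding ricci_identity[OF q] by (simp add: eta_def algebra_simps)
  finally show ?thesis .
qed

lemma Bop_eq: assumes q: "q \<in> U"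
  shows "Bop \<Gamma> (killing \<Gamma> \<xi>) l q = eta \<Gamma> \<xi> l q"
proof -
  have nz: "ricci \<Gamma> 1 2 q \<noteq> 0" using r_nz[OF q] .
  have rv: "ricci \<Gamma> 1 1 q = 0" "ricci \<Gamma> 2 2 q = 0" "ricci \<Gamma> 2 1 q = - ricci \<Gamma> 1 2 q"
    using ricci_vals[OF q] by auto
  have all: "\<forall>i j. eta \<Gamma> \<xi> l q * ricci \<Gamma> i j q = dnabla \<Gamma> (killing \<Gamma> \<xi>) i j l q"
  proof (intro allI)
    fix i j :: 2
    have H: "\<forall>l i j. eta \<Gamma> \<xi> l q * ricci \<Gamma> i j q = eta \<Gamma> \<xi> j q * ricci \<Gamma> i l q - eta \<Gamma> \<xi> i q * ricci \<Gamma> j l q"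
      unfolding forall_2 by (simp add: rv algebra_simps)
    have "eta \<Gamma> \<xi> l q * ricci \<Gamma> i j q = eta \<Gamma> \<xi> j q * ricci \<Gamma> i l q - eta \<Gamma> \<xi> i q * ricci \<Gamma> j l q"
      using H by blast
    then show "eta \<Gamma> \<xi> l q * ricci \<Gamma> i j q = dnabla \<Gamma> (killing \<Gamma> \<xi>) i j l q" unfolding dnabla_eq[OF q] .
  qed
  show ?thesis unfolding Bop_def
  proof (rule the_equality)
    show "\<forall>i j. eta \<Gamma> \<xi> l q * ricci \<Gamma> i j q = dnabla \<Gamma> (killing \<Gamma> \<xi>) i j l q" by (rule all)
  next
    fix c assume "\<forall>i j. c * ricci \<Gamma> i j q = dnabla \<Gamma> (killing \<Gamma> \<xi>) i j l q"
    then have "c * ricci \<Gamma> 1 2 q = dnabla \<Gamma> (killing \<Gamma> \<xi>) 1 2 l q" by blast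
    moreover have "eta \<Gamma> \<xi> l q * ricci \<Gamma> 1 2 q = dnabla \<Gamma> (killing \<Gamma> \<xi>) 1 2 l q" using all by blast
    ultimately have "c * ricci \<Gamma> 1 2 q = eta \<Gamma> \<xi> l q * ricci \<Gamma> 1 2 q" by simp
    then show "c = eta \<Gamma> \<xi> l q" using nz by simp
  qed
qed

lemma pd_eta: assumes q: "q \<in> U"
  shows "pd a (eta \<Gamma> \<xi> b) q = pd a (\<xi> b) q + pd a (pd b (ff \<Gamma> \<xi>)) q
          + (pd a (ff \<Gamma> \<xi>) q * phi \<Gamma> b q + ff \<Gamma> \<xi> q * pd a (phi \<Gamma> b) q)"
proof -
  have e: "eta \<Gamma> \<xi> b = (\<lambda>x. \<xi> b x + pd b (ff \<Gamma> \<xi>) x + ff \<Gamma> \<xi> x * phi \<Gamma> b x)"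
    by (rule ext) (simp add: eta_def)
  show ?thesis unfolding e using diffs[OF q] by (simp add: pd_add pd_mult)
qed

lemma dphi: assumes q: "q \<in> U"
  shows "pd 1 (phi \<Gamma> 2) q - pd 2 (phi \<Gamma> 1) q = 2 * ricci \<Gamma> 1 2 q"
proof -
  have nz: "ricci \<Gamma> 1 2 q \<noteq> 0" using r_nz[OF q] .
  have pp: "pd a (phi0 \<Gamma> b) q = (pd a (pd b (ricci \<Gamma> 1 2)) q * ricci \<Gamma> 1 2 q - pd b (ricci \<Gamma> 1 2) q * pd a (ricci \<Gamma> 1 2) q) / (ricci \<Gamma> 1 2 q)^2
      - (pd a (\<Gamma> 1 b 1) q + pd a (\<Gamma> 2 b 2) q)" for a b
  proof -
    have e: "phi0 \<Gamma> b = (\<lambda>x. pd b (ricci \<Gamma> 1 2) x / ricci \<Gamma> 1 2 x - (\<Gamma> 1 b 1 x + \<Gamma> 2 b 2 x))"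
      by (rule ext) (simp add: phi0_def)
    show ?thesis unfolding e using diffs[OF q] nz by (simp add: pd_diff pd_add pd_divide)
  qed
  have cl: "pd 1 (pd 2 (ricci \<Gamma> 1 2)) q = pd 2 (pd 1 (ricci \<Gamma> 1 2)) q"
    by (rule clairaut[OF U_open q sm_r])
  have sG: "\<And>k. \<Gamma> k 2 1 q = \<Gamma> k 1 2 q" using torsion_free[OF q] by blast
  have sdG: "\<And>a k. pd a (\<Gamma> k 2 1) q = pd a (\<Gamma> k 1 2) q" using dG_sym[OF q] by blast
  have r2: "2 * ricci \<Gamma> 1 2 q = ricci \<Gamma> 1 2 q - ricci \<Gamma> 2 1 q" using ricci_vals[OF q] by simp
  have tr: "ricci \<Gamma> 1 2 q - ricci \<Gamma> 2 1 q = - (pd 1 (\<Gamma> 1 2 1) q + pd 1 (\<Gamma> 2 2 2) q) + (pd 2 (\<Gamma> 1 1 1) q + pd 2 (\<Gamma> 2 1 2) q)"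
    by (simp add: ricci_def curv_def sum_2 sG sdG algebra_simps)
  show ?thesis unfolding pd_phi[OF q] pp r2 tr cl by (simp add: algebra_simps)
qed

lemma phi_w: assumes q: "q \<in> U"
  shows "phi \<Gamma> 1 q = - ricci \<Gamma> 1 2 q * w0 \<Gamma> 2 q" "phi \<Gamma> 2 q = ricci \<Gamma> 1 2 q * w0 \<Gamma> 1 q"
  using r_nz[OF q] phi_char(1)[OF q] by (simp_all add: w0_def)

lemma Dop_eq: assumes p: "p \<in> U"
  shows "Dop \<Gamma> (Bop \<Gamma> (killing \<Gamma> \<xi>)) p = (\<Sum>k\<in>UNIV. \<xi> k p * wvec \<Gamma> k p) / 2 - 2 * ff \<Gamma> \<xi> p"
proof -
  define B where "B = Bop \<Gamma> (killing \<Gamma> \<xi>)"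
  define W where "W = (\<Sum>k\<in>UNIV. \<xi> k p * wvec \<Gamma> k p)"
  define c0 where "c0 = W / 2 - 2 * ff \<Gamma> \<xi> p"
  define r where "r = ricci \<Gamma> 1 2 p"
  have nz: "r \<noteq> 0" using r_nz[OF p] r_def by simp
  have rv: "ricci \<Gamma> 1 1 p = 0" "ricci \<Gamma> 2 2 p = 0" "ricci \<Gamma> 2 1 p = - r"
    using ricci_vals[OF p] r_def by auto
  have Bv: "\<And>k. B k p = eta \<Gamma> \<xi> k p" unfolding B_def by (rule Bop_eq[OF p])
  have dB: "\<And>i j. pd i (B j) p = pd i (eta \<Gamma> \<xi> j) p"
    unfolding B_def by (rule pd_local[OF U_open p]) (simp add: Bop_eq)
  have Wr: "W * r = \<xi> 1 p * phi \<Gamma> 2 p - \<xi> 2 p * phi \<Gamma> 1 p"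
    unfolding W_def r_def by (simp add: sum_2 wvec_char[OF p] phi_w[OF p] algebra_simps)
  have f: "pd 1 (\<xi> 2) p = pd 2 (\<xi> 1) p + 2 * (ff \<Gamma> \<xi> p * r)" using ffr[OF p] r_def by simp
  have cf: "pd 1 (pd 2 (ff \<Gamma> \<xi>)) p = pd 2 (pd 1 (ff \<Gamma> \<xi>)) p" by (rule clairaut[OF U_open p sm_ff])
  have dp: "pd 1 (phi \<Gamma> 2) p = pd 2 (phi \<Gamma> 1) p + 2 * r" using dphi[OF p] r_def by simp
  have k1: "2 * c0 * r = \<xi> 1 p * phi \<Gamma> 2 p - \<xi> 2 p * phi \<Gamma> 1 p - 4 * (ff \<Gamma> \<xi> p * r)"
  proof -
    have "2 * c0 * r = W * r - 4 * (ff \<Gamma> \<xi> p * r)" unfolding c0_def by (simp add: algebra_simps)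
    then show ?thesis unfolding Wr .
  qed
  have k2: "wedge1 B (phi \<Gamma>) 1 2 p - dform B 1 2 p = \<xi> 1 p * phi \<Gamma> 2 p - \<xi> 2 p * phi \<Gamma> 1 p - 4 * (ff \<Gamma> \<xi> p * r)"
    unfolding wedge1_def dform_def Bv dB pd_eta[OF p] f cf dp
    by (simp add: eta_def algebra_simps)
  have k12: "2 * c0 * ricci \<Gamma> 1 2 p = wedge1 B (phi \<Gamma>) 1 2 p - dform B 1 2 p"
    using k1 k2 r_def by simp
  have all: "\<forall>i j. 2 * c0 * ricci \<Gamma> i j p = wedge1 B (phi \<Gamma>) i j p - dform B i j p"
  proof -
    have sk: "\<And>i j. wedge1 B (phi \<Gamma>) j i p - dform B j i p = - (wedge1 B (phi \<Gamma>) i j p - dform B i j p)"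
      by (simp add: wedge1_def dform_def algebra_simps)
    have dg: "\<And>i. wedge1 B (phi \<Gamma>) i i p - dform B i i p = 0"
      by (simp add: wedge1_def dform_def)
    have k21: "2 * c0 * ricci \<Gamma> 2 1 p = wedge1 B (phi \<Gamma>) 2 1 p - dform B 2 1 p"
      using sk[of 1 2] k12 rv(3) r_def by simp
    show ?thesis unfolding forall_2 using k12 k21 dg[of 1] dg[of 2] rv(1,2) by simp
  qed
  have "Dop \<Gamma> B p = c0"
    unfolding Dop_def
  proof (rule the_equality)
    show "\<forall>i j. 2 * c0 * ricci \<Gamma> i j p = wedge1 B (phi \<Gamma>) i j p - dform B i j p" by (rule all)
  next
    fix c assume "\<forall>i j. 2 * c * ricci \<Gamma> i j p = wedge1 B (phi \<Gamma>) i j p - dform B i j p"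
    then have "2 * c * ricci \<Gamma> 1 2 p = 2 * c0 * ricci \<Gamma> 1 2 p" using k12 by simp
    then show "c = c0" using nz r_def by simp
  qed
  then show ?thesis unfolding B_def c0_def W_def .
qed

lemma pd_D: assumes p: "p \<in> U"
  shows "pd i (Dop \<Gamma> (Bop \<Gamma> (killing \<Gamma> \<xi>))) p = (1/2) * ((pd i (\<xi> 1) p * w0 \<Gamma> 1 p + \<xi> 1 p * pd i (w0 \<Gamma> 1) p)
     + (pd i (\<xi> 2) p * w0 \<Gamma> 2 p + \<xi> 2 p * pd i (w0 \<Gamma> 2) p)) - 2 * pd i (ff \<Gamma> \<xi>) p"
proof -
  have "pd i (Dop \<Gamma> (Bop \<Gamma> (killing \<Gamma> \<xi>))) p = pd i (\<lambda>x. (1/2) * (\<xi> 1 x * w0 \<Gamma> 1 x + \<xi> 2 x * w0 \<Gamma> 2 x) - 2 * ff \<Gamma> \<xi> x) p"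
    by (rule pd_local[OF U_open p]) (simp add: Dop_eq sum_2 wvec_char)
  also have "\<dots> = (1/2) * ((pd i (\<xi> 1) p * w0 \<Gamma> 1 p + \<xi> 1 p * pd i (w0 \<Gamma> 1) p)
     + (pd i (\<xi> 2) p * w0 \<Gamma> 2 p + \<xi> 2 p * pd i (w0 \<Gamma> 2) p)) - 2 * pd i (ff \<Gamma> \<xi>) p"
    using diffs[OF p] by (simp add: pd_diff pd_add pd_mult pd_divc pd_const)
  finally show ?thesis .
qed

lemma main: assumes p: "p \<in> U"
  shows "Qstar \<Gamma> \<xi> i p = Zop \<Gamma> (killing \<Gamma> \<xi>) i p
         \<and> (\<forall>j. cov1 \<Gamma> \<xi> i j p = killing \<Gamma> \<xi> i j p
               + ((\<Sum>k\<in>UNIV. \<xi> k p * wvec \<Gamma> k p) - 2 * Dop \<Gamma> (Bop \<Gamma> (killing \<Gamma> \<xi>)) p)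
                 * ricci \<Gamma> i j p / 4)"
proof
  show "\<forall>j. cov1 \<Gamma> \<xi> i j p = killing \<Gamma> \<xi> i j p
               + ((\<Sum>k\<in>UNIV. \<xi> k p * wvec \<Gamma> k p) - 2 * Dop \<Gamma> (Bop \<Gamma> (killing \<Gamma> \<xi>)) p)
                 * ricci \<Gamma> i j p / 4"
    unfolding Dop_eq[OF p] killing_eq[OF p] by (simp add: field_simps)
next
  define r where "r = ricci \<Gamma> 1 2 p"
  have rv: "ricci \<Gamma> 1 1 p = 0" "ricci \<Gamma> 2 2 p = 0" "ricci \<Gamma> 2 1 p = - r" "ricci \<Gamma> 1 2 p = r"
    using ricci_vals[OF p] r_def by auto
  have f: "pd 1 (\<xi> 2) p = pd 2 (\<xi> 1) p + 2 * (ff \<Gamma> \<xi> p * r)" using ffr[OF p] r_def by simp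
  have sG: "\<And>k. \<Gamma> k 2 1 p = \<Gamma> k 1 2 p" using torsion_free[OF p] by blast
  have ph: "phi \<Gamma> 1 p = - r * w0 \<Gamma> 2 p" "phi \<Gamma> 2 p = r * w0 \<Gamma> 1 p" using phi_w[OF p] r_def by auto
  have pw: "\<And>i k. pd i (wvec \<Gamma> k) p = pd i (w0 \<Gamma> k) p"
    by (rule pd_local[OF U_open p]) (simp add: wvec_char)
  have "\<forall>i. Qstar \<Gamma> \<xi> i p = Zop \<Gamma> (killing \<Gamma> \<xi>) i p"
    unfolding forall_2 Qstar_def Zop_def covvec_def pw pd_D[OF p] Dop_eq[OF p] Bop_eq[OF p] killing_eq[OF p]
    by (simp add: sum_2 wvec_char[OF p] eta_def cov1_def ph rv f sG field_simps)
  then show "Qstar \<Gamma> \<xi> i p = Zop \<Gamma> (killing \<Gamma> \<xi>) i p" by blast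
qed


end

theorem lemma12p1:
  fixes U :: "pt set" and \<Gamma> :: "2 \<Rightarrow> 2 \<Rightarrow> 2 \<Rightarrow> pt \<Rightarrow> real" and \<xi> :: "2 \<Rightarrow> pt \<Rightarrow> real"
  assumes U_open: "open U"
    and \<Gamma>_smooth: "\<And>k i j. smooth_on U (\<Gamma> k i j)"
    and torsion_free: "\<And>k i j p. p \<in> U \<Longrightarrow> \<Gamma> k i j p = \<Gamma> k j i p"
    and ricci_skew: "\<And>i j p. p \<in> U \<Longrightarrow> ricci \<Gamma> j i p = - ricci \<Gamma> i j p"
    and ricci_nonzero: "\<And>p. p \<in> U \<Longrightarrow> \<exists>i j. ricci \<Gamma> i j p \<noteq> 0"
    and \<xi>_smooth: "\<And>i. smooth_on U (\<xi> i)"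
  shows "\<forall>p\<in>U. \<forall>i.
           Qstar \<Gamma> \<xi> i p = Zop \<Gamma> (killing \<Gamma> \<xi>) i p
         \<and> (\<forall>j. cov1 \<Gamma> \<xi> i j p = killing \<Gamma> \<xi> i j p
               + ((\<Sum>k\<in>UNIV. \<xi> k p * wvec \<Gamma> k p) - 2 * Dop \<Gamma> (Bop \<Gamma> (killing \<Gamma> \<xi>)) p)
                 * ricci \<Gamma> i j p / 4)"
proof -
  have G: "geo U \<Gamma> \<xi>"
    by (rule geo.intro[OF U_open \<Gamma>_smooth torsion_free ricci_skew ricci_nonzero \<xi>_smooth])
  show ?thesis by (intro ballI allI) (rule geo.main[OF G])
qed

end
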